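(* Let $\alpha\in(0,1)$. For any distribution functions $F,G$ on $\mathbb R$, $$|\mathrm{VaR}_\alpha(F)-\mathrm{VaR}_\alpha(G)|\le\frac{2\|F\|+\|F-G\|}{\min\{\alpha,1-\alpha\}},$$ where $\|F\|=\max\{\|F\|_\infty,|\int_{-\infty}^0x\,dF(x)|,|\int_0^\infty x\,dF(x)|\}$.
   Context: $\|F\|_\infty=\sup_x|F(x)|$; integrals are Lebesgue–Stieltjes integrals (the norm may be $+\infty$, in which case the inequality is trivial). $\mathrm{VaR}_\alpha(F)=\inf\{y\in\mathbb R:F(y)\ge\alpha\}$. *)

theory Defs
  imports "HOL-Analysis.Analysis"
begin

definition is_distribution_function :: "(real \<Rightarrow> real) \<Rightarrow> bool" where
  "is_distribution_function F \<longleftrightarrow> mono F \<and> (\<forall>x. continuous (at_right x) F) \<and>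
     (F \<longlongrightarrow> 0) at_bot \<and> (F \<longlongrightarrow> 1) at_top"

definition VaR :: "real \<Rightarrow> (real \<Rightarrow> real) \<Rightarrow> real" where
  "VaR \<alpha> F = Inf {y. F y \<ge> \<alpha>}"

definition ls_moment :: "(real \<Rightarrow> real) \<Rightarrow> real set \<Rightarrow> real" where
  "ls_moment F S = (LINT x:S | interval_measure F. x)"

definition abs_moment :: "(real \<Rightarrow> real) \<Rightarrow> real set \<Rightarrow> ereal" where
  "abs_moment F S = (if set_integrable (interval_measure F) S (\<lambda>x. x)
      then ereal \<bar>ls_moment F S\<bar> else \<infinity>)"

definition abs_moment_diff :: "(real \<Rightarrow> real) \<Rightarrow> (real \<Rightarrow> real) \<Rightarrow> real set \<Rightarrow> ereal" where
  "abs_moment_diff F G S = (if set_integrable (interval_measure F) S (\<lambda>x. x)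
        \<and> set_integrable (interval_measure G) S (\<lambda>x. x)
      then ereal \<bar>ls_moment F S - ls_moment G S\<bar> else \<infinity>)"

definition dnorm :: "(real \<Rightarrow> real) \<Rightarrow> ereal" where
  "dnorm F = max (SUP x. ereal \<bar>F x\<bar>) (max (abs_moment F {..0}) (abs_moment F {0..}))"

definition dnorm_diff :: "(real \<Rightarrow> real) \<Rightarrow> (real \<Rightarrow> real) \<Rightarrow> ereal" where
  "dnorm_diff F G = max (SUP x. ereal \<bar>F x - G x\<bar>)
      (max (abs_moment_diff F G {..0}) (abs_moment_diff F G {0..}))"

end

theory Submission
  imports Defs "HOL-Probability.Probability"
begin

lemma VaR_facts:
  assumes df: "is_distribution_function F" and a: "0 < \<alpha>" "\<alpha> < 1"
  shows "F (VaR \<alpha> F) \<ge> \<alpha>" and "\<And>y. y < VaR \<alpha> F \<Longrightarrow> F y < \<alpha>"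
proof -
  have mono: "mono F" and rc: "\<And>x. continuous (at_right x) F"
    and lb: "(F \<longlongrightarrow> 0) at_bot" and lt: "(F \<longlongrightarrow> 1) at_top"
    using df by (auto simp: is_distribution_function_def)
  define S where "S = {y. F y \<ge> \<alpha>}"
  have "eventually (\<lambda>x. F x > \<alpha>) at_top"
    using order_tendstoD(1)[OF lt] a by auto
  then obtain x0 where "F x0 > \<alpha>" by (auto simp: eventually_at_top_linorder)
  then have ne: "S \<noteq> {}" unfolding S_def using less_imp_le by blast
  have "eventually (\<lambda>x. F x < \<alpha>) at_bot"
    using order_tendstoD(2)[OF lb] a by auto
  then obtain b where b: "\<And>x. x \<le> b \<Longrightarrow> F x < \<alpha>" by (auto simp: eventually_at_bot_linorder)
  have bdd: "bdd_below S"
    unfolding bdd_below_def S_def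
  proof (intro exI[of _ b] ballI)
    fix s assume "s \<in> {y. \<alpha> \<le> F y}"
    then have "\<not> F s < \<alpha>" by simp
    show "b \<le> s"
    proof (rule ccontr)
      assume "\<not> b \<le> s"
      then have "s \<le> b" by simp
      then have "F s < \<alpha>" by (rule b)
      with \<open>\<not> F s < \<alpha>\<close> show False by simp
    qed
  qed
  have q: "VaR \<alpha> F = Inf S" by (simp add: VaR_def S_def)
  show "\<And>y. y < VaR \<alpha> F \<Longrightarrow> F y < \<alpha>"
  proof (rule ccontr)
    fix y assume "y < VaR \<alpha> F" "\<not> F y < \<alpha>"
    then have "y \<in> S" by (simp add: S_def)
    then have "Inf S \<le> y" using cInf_lower[OF _ bdd] by blast
    with \<open>y < VaR \<alpha> F\<close> q show False by simp
  qed
  have ev: "eventually (\<lambda>x. \<alpha> \<le> F x) (at_right (VaR \<alpha> F))"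
    unfolding eventually_at_right_field
  proof (intro exI[of _ "VaR \<alpha> F + 1"] conjI allI impI)
    fix x assume "VaR \<alpha> F < x"
    then have "Inf S < x" using q by simp
    then obtain s where "s \<in> S" "s < x" using cInf_less_iff[OF ne bdd] by blast
    then have "F s \<le> F x" using mono by (simp add: mono_def)
    with \<open>s \<in> S\<close> show "\<alpha> \<le> F x" by (simp add: S_def)
  qed simp
  have "(F \<longlongrightarrow> F (VaR \<alpha> F)) (at_right (VaR \<alpha> F))"
    using rc[of "VaR \<alpha> F"] by (simp add: continuous_within)
  then show "F (VaR \<alpha> F) \<ge> \<alpha>"
    by (rule tendsto_lowerbound[OF _ ev]) simp
qed

lemma VaR_bound:
  assumes df: "is_distribution_function F" and a: "0 < \<alpha>" "\<alpha> < 1"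
    and i0: "set_integrable (interval_measure F) {..0} (\<lambda>x. x)"
    and i1: "set_integrable (interval_measure F) {0..} (\<lambda>x. x)"
  shows "\<bar>VaR \<alpha> F\<bar> * min \<alpha> (1 - \<alpha>) \<le> max \<bar>ls_moment F {..0}\<bar> \<bar>ls_moment F {0..}\<bar>"
proof -
  have mono: "mono F" and rc: "\<And>x. continuous (at_right x) F"
    and lb: "(F \<longlongrightarrow> 0) at_bot" and lt: "(F \<longlongrightarrow> 1) at_top"
    using df by (auto simp: is_distribution_function_def)
  have nd: "\<And>x y. x \<le> y \<Longrightarrow> F x \<le> F y" using mono by (simp add: mono_def)
  define M where "M = interval_measure F"
  interpret real_distribution M
    unfolding M_def by (rule real_distribution_interval_measure[OF nd rc lb lt])
  have Iic: "measure M {..x} = F x" for x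
    unfolding M_def by (rule measure_interval_measure_Iic[OF nd rc lb])
  have Ioi: "measure M {x<..} = 1 - F x" for x
  proof -
    have "{x<..} = space M - {..x}" by auto
    then have "measure M {x<..} = 1 - measure M {..x}"
      using prob_compl[of "{..x}"] by simp
    then show ?thesis by (simp add: Iic)
  qed
  define q where "q = VaR \<alpha> F"
  have Fq: "F q \<ge> \<alpha>" and Fy: "\<And>y. y < q \<Longrightarrow> F y < \<alpha>"
    using VaR_facts[OF df a] unfolding q_def by auto
  have m0: "ls_moment F {..0} = (LINT x|M. indicator {..0} x * x)"
    by (simp add: ls_moment_def set_lebesgue_integral_def M_def)
  have m1: "ls_moment F {0..} = (LINT x|M. indicator {0..} x * x)"
    by (simp add: ls_moment_def set_lebesgue_integral_def M_def)
  have int0: "integrable M (\<lambda>x. indicator {..0} x * x)"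
    using i0 by (simp add: set_integrable_def M_def)
  have int1: "integrable M (\<lambda>x. indicator {0..} x * x)"
    using i1 by (simp add: set_integrable_def M_def)
  have intc: "integrable M (\<lambda>x. c * indicator A x :: real)" if "A \<in> sets borel" for c :: real and A :: "real set"
    using that by (intro integrable_mult_right integrable_real_indicator) (auto simp: emeasure_eq_measure)
  have lintc: "(LINT x|M. c * indicator A x) = c * measure M A" if "A \<in> sets borel" for c :: real and A :: "real set"
    using that by (simp add: emeasure_eq_measure)
  consider "q > 0" | "q = 0" | "q < 0" by linarith
  then show ?thesis
  proof cases
    case 1
    have yb: "y \<le> ls_moment F {0..} / (1 - \<alpha>)" if "0 < y" "y < q" for y
    proof -
      have "y * (1 - \<alpha>) \<le> y * (1 - F y)"
        using Fy[OF \<open>y < q\<close>] \<open>0 < y\<close> by (intro mult_left_mono) auto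
      also have "\<dots> = (LINT x|M. y * indicator {y<..} x)"
        by (subst lintc) (auto simp: Ioi)
      also have "\<dots> \<le> (LINT x|M. indicator {0..} x * x)"
        using \<open>0 < y\<close>
        by (intro integral_mono intc int1) (auto simp: indicator_def)
      finally show ?thesis using a by (simp add: m1 field_simps)
    qed
    have "q \<le> ls_moment F {0..} / (1 - \<alpha>)"
      using 1 yb by (rule dense_le_bounded)
    then have qm: "q * (1 - \<alpha>) \<le> ls_moment F {0..}" using a by (simp add: field_simps)
    have "\<bar>q\<bar> * min \<alpha> (1 - \<alpha>) = q * min \<alpha> (1 - \<alpha>)" using 1 by simp
    also have "\<dots> \<le> q * (1 - \<alpha>)" using 1 by (intro mult_left_mono) auto
    also have "\<dots> \<le> ls_moment F {0..}" by (rule qm)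
    also have "\<dots> \<le> \<bar>ls_moment F {0..}\<bar>" by (rule abs_ge_self)
    finally have "\<bar>q\<bar> * min \<alpha> (1 - \<alpha>) \<le> \<bar>ls_moment F {0..}\<bar>" .
    then show ?thesis unfolding q_def by (simp add: max.coboundedI2)
  next
    case 2 then show ?thesis unfolding q_def[symmetric] by simp
  next
    case 3
    have "(LINT x|M. indicator {..0} x * x) \<le> (LINT x|M. q * indicator {..q} x)"
      using 3 by (intro integral_mono intc int0) (auto simp: indicator_def)
    also have "\<dots> = q * F q" by (subst lintc) (auto simp: Iic)
    also have "\<dots> \<le> q * \<alpha>" using 3 Fq by (intro mult_left_mono_neg) auto
    finally have qm: "- q * \<alpha> \<le> - ls_moment F {..0}" by (simp add: m0)
    have "\<bar>q\<bar> * min \<alpha> (1 - \<alpha>) = - q * min \<alpha> (1 - \<alpha>)" using 3 by simp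
    also have "\<dots> \<le> - q * \<alpha>" using 3 by (intro mult_left_mono) auto
    also have "\<dots> \<le> - ls_moment F {..0}" by (rule qm)
    also have "\<dots> \<le> \<bar>ls_moment F {..0}\<bar>" by simp
    finally have "\<bar>q\<bar> * min \<alpha> (1 - \<alpha>) \<le> \<bar>ls_moment F {..0}\<bar>" .
    then show ?thesis unfolding q_def by (simp add: max.coboundedI1)
  qed
qed

lemma dnorm_nonneg: "0 \<le> dnorm F"
proof -
  have "0 \<le> ereal \<bar>F 0\<bar>" by simp
  also have "\<dots> \<le> (SUP x. ereal \<bar>F x\<bar>)" by (rule SUP_upper) simp
  finally show ?thesis unfolding dnorm_def by (simp add: le_max_iff_disj)
qed

lemma dnorm_diff_nonneg: "0 \<le> dnorm_diff F G"
proof -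
  have "0 \<le> ereal \<bar>F 0 - G 0\<bar>" by simp
  also have "\<dots> \<le> (SUP x. ereal \<bar>F x - G x\<bar>)" by (rule SUP_upper) simp
  finally show ?thesis unfolding dnorm_diff_def by (simp add: le_max_iff_disj)
qed

theorem lemma30:
  fixes \<alpha> :: real and F G :: "real \<Rightarrow> real"
  assumes "0 < \<alpha>" "\<alpha> < 1"
    and "is_distribution_function F" "is_distribution_function G"
  shows "ereal \<bar>VaR \<alpha> F - VaR \<alpha> G\<bar>
           \<le> (2 * dnorm F + dnorm_diff F G) / ereal (min \<alpha> (1 - \<alpha>))"
proof -
  define m where "m = min \<alpha> (1 - \<alpha>)"
  have mpos: "0 < m" using assms(1,2) by (simp add: m_def)
  define X where "X = 2 * dnorm F + dnorm_diff F G"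
  have "ereal m * ereal \<bar>VaR \<alpha> F - VaR \<alpha> G\<bar> \<le> X"
  proof (cases "set_integrable (interval_measure F) {..0} (\<lambda>x. x)
       \<and> set_integrable (interval_measure F) {0..} (\<lambda>x. x)
       \<and> set_integrable (interval_measure G) {..0} (\<lambda>x. x)
       \<and> set_integrable (interval_measure G) {0..} (\<lambda>x. x)")
    case True
    define a0 where "a0 = ls_moment F {..0}"
    define a1 where "a1 = ls_moment F {0..}"
    define b0 where "b0 = ls_moment G {..0}"
    define b1 where "b1 = ls_moment G {0..}"
    define mF where "mF = max \<bar>a0\<bar> \<bar>a1\<bar>"
    define mG where "mG = max \<bar>b0\<bar> \<bar>b1\<bar>"
    define dm where "dm = max \<bar>a0 - b0\<bar> \<bar>a1 - b1\<bar>"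
    have bF: "\<bar>VaR \<alpha> F\<bar> * m \<le> mF"
      using VaR_bound[OF assms(3,1,2)] True unfolding mF_def a0_def a1_def m_def by blast
    have bG: "\<bar>VaR \<alpha> G\<bar> * m \<le> mG"
      using VaR_bound[OF assms(4,1,2)] True unfolding mG_def b0_def b1_def m_def by blast
    have mGF: "mG \<le> mF + dm" unfolding mG_def mF_def dm_def by (smt (verit))
    have "m * \<bar>VaR \<alpha> F - VaR \<alpha> G\<bar> \<le> m * (\<bar>VaR \<alpha> F\<bar> + \<bar>VaR \<alpha> G\<bar>)"
      using mpos by (intro mult_left_mono) auto
    also have "\<dots> \<le> 2 * mF + dm" using bF bG mGF by (simp add: algebra_simps)
    finally have r: "m * \<bar>VaR \<alpha> F - VaR \<alpha> G\<bar> \<le> 2 * mF + dm" .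
    have dF: "ereal mF \<le> dnorm F"
      using True unfolding dnorm_def abs_moment_def mF_def a0_def a1_def
      by (simp add: le_max_iff_disj)
    have dD: "ereal dm \<le> dnorm_diff F G"
      using True unfolding dnorm_diff_def abs_moment_diff_def dm_def a0_def a1_def b0_def b1_def
      by (simp add: le_max_iff_disj)
    have "ereal m * ereal \<bar>VaR \<alpha> F - VaR \<alpha> G\<bar> = ereal (m * \<bar>VaR \<alpha> F - VaR \<alpha> G\<bar>)" by simp
    also have "\<dots> \<le> ereal (2 * mF + dm)" using r by simp
    also have "\<dots> = 2 * ereal mF + ereal dm" by simp
    also have "\<dots> \<le> X" unfolding X_def
      by (intro add_mono ereal_mult_left_mono dF dD) simp
    finally show ?thesis .
  next
    case False
    have "dnorm F = \<infinity> \<or> dnorm_diff F G = \<infinity>"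
      using False unfolding dnorm_def dnorm_diff_def abs_moment_def abs_moment_diff_def
      by (auto simp: max_def)
    then have "X = \<infinity>" unfolding X_def using dnorm_nonneg[of F] dnorm_diff_nonneg[of F G]
      by auto
    then show ?thesis by simp
  qed
  then show ?thesis
    unfolding X_def[symmetric] m_def[symmetric]
    using mpos by (subst ereal_le_divide_pos) auto
qed

end
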